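(* Let $1<p<\infty$, let $q$ be defined by $\frac1p+\frac1q=1$, and let $0<\gamma<3^{-\frac1q}$. Let $(x^*_j)$ be a normalized block basis of $(e_j^* )$ in the dual space $Ti^*(p,\gamma)$. Then for every $n\in\mathbb{N}$ and every choice of real numbers $(a_j)_{j=1}^n$, $$\left\|\sum_{j=1}^n a_jx_j^*\right\|\ge \frac1{3^{\frac1q}}\left(\sum_{j=1}^n|a_j|^q\right)^{\frac1q}.$$
   Context: For $1<p<\infty$, $\frac1p+\frac1q=1$ and $0<\gamma<1$, the Tirilman space $Ti(p,\gamma)$ is the completion of $c_{00}$ (finitely supported real sequences) under the norm defined implicitly by $$\|a\|=\max\Big\{\|a\|_\infty,\ \gamma\sup\frac{\sum_{j=1}^n\|E_ja\|}{n^{1/q}}\Big\},$$ where the supremum is over all $n\in\mathbb{N}$ and all finite sets of consecutive natural numbers $E_1<\dots<E_n$ (meaning $\max E_i<\min E_{i+1}$), and $E_ja$ denotes the restriction of $a$ to $E_j$. The unit vectors $(e_n)$ form a 1-subsymmetric basis of $Ti(p,\gamma)$; $(e_n^* )$ denotes the biorthogonal functionals, which form a basis of the dual $Ti^*(p,\gamma)$. A block basis of $(e^*_n)$ is a sequence of nonzero vectors $y_n=\sum_{k=p_n+1}^{p_{n+1}}a_ke^*_k$ with $p_1<p_2<\cdots$. *)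

theory Defs
  imports Complex_Main
begin

definition c00 :: "(nat \<Rightarrow> real) set" where
  "c00 = {a. finite {k. a k \<noteq> 0}}"

definition conj_exp :: "real \<Rightarrow> real" where
  "conj_exp p = p / (p - 1)"

definition supnorm :: "(nat \<Rightarrow> real) \<Rightarrow> real" where
  "supnorm a = (SUP k. \<bar>a k\<bar>)"

definition restr :: "nat set \<Rightarrow> (nat \<Rightarrow> real) \<Rightarrow> nat \<Rightarrow> real" where
  "restr E a = (\<lambda>k. if k \<in> E then a k else 0)"

text \<open>Admissible families: n \<ge> 1 nonempty intervals E_j = {l j..r j}, j<n, with E_0 < E_1 < ... < E_(n-1).\<close>
definition adm :: "nat \<Rightarrow> (nat \<Rightarrow> nat) \<Rightarrow> (nat \<Rightarrow> nat) \<Rightarrow> bool" where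
  "adm n l r \<longleftrightarrow> n \<ge> 1 \<and> (\<forall>j<n. l j \<le> r j) \<and> (\<forall>j. Suc j < n \<longrightarrow> r j < l (Suc j))"

text \<open>Standard iterative construction of the implicitly defined norm.\<close>
fun ti_iter :: "real \<Rightarrow> real \<Rightarrow> nat \<Rightarrow> (nat \<Rightarrow> real) \<Rightarrow> real" where
  "ti_iter p \<gamma> 0 a = supnorm a"
| "ti_iter p \<gamma> (Suc m) a = max (supnorm a)
     (\<gamma> * (SUP nlr \<in> {(n, l, r). adm n l r}.
        (case nlr of (n, l, r) \<Rightarrow>
          (\<Sum>j<n. ti_iter p \<gamma> m (restr {l j..r j} a)) / real n powr (1 / conj_exp p))))"

definition ti_norm :: "real \<Rightarrow> real \<Rightarrow> (nat \<Rightarrow> real) \<Rightarrow> real" where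
  "ti_norm p \<gamma> a = (SUP m. ti_iter p \<gamma> m a)"

text \<open>Dual norm of a finitely supported functional f = sum_k f k e_k^*
  (c00 is dense in Ti(p,gamma), so the sup over c00 is the dual norm).\<close>
definition ti_dual_norm :: "real \<Rightarrow> real \<Rightarrow> (nat \<Rightarrow> real) \<Rightarrow> real" where
  "ti_dual_norm p \<gamma> f = (SUP a \<in> {a \<in> c00. ti_norm p \<gamma> a \<le> 1}.
      \<bar>\<Sum>k\<in>{k. f k \<noteq> 0}. f k * a k\<bar>)"

definition is_block_basis :: "(nat \<Rightarrow> nat \<Rightarrow> real) \<Rightarrow> bool" where
  "is_block_basis x \<longleftrightarrow> (\<exists>pp :: nat \<Rightarrow> nat. strict_mono pp \<and>
      (\<forall>j k. x j k \<noteq> 0 \<longrightarrow> pp j < k \<and> k \<le> pp (Suc j)) \<and> (\<forall>j. x j \<noteq> (\<lambda>_. 0)))"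

end

theory Submission imports Defs "HOL-Analysis.Analysis"
begin

lemma restr_c00: "a \<in> c00 \<Longrightarrow> restr E a \<in> c00"
  unfolding c00_def restr_def by (auto elim: rev_finite_subset)

lemma restr_restr: "restr E (restr F a) = restr (E \<inter> F) a"
  unfolding restr_def by auto

lemma supnorm_bdd: "a \<in> c00 \<Longrightarrow> bdd_above (range (\<lambda>k. \<bar>a k\<bar>))"
proof -
  assume "a \<in> c00"
  then have "finite ((\<lambda>k. \<bar>a k\<bar>) ` {k. a k \<noteq> 0})" unfolding c00_def by auto
  then have "finite (insert 0 ((\<lambda>k. \<bar>a k\<bar>) ` {k. a k \<noteq> 0}))" by auto
  moreover have "range (\<lambda>k. \<bar>a k\<bar>) \<subseteq> insert 0 ((\<lambda>k. \<bar>a k\<bar>) ` {k. a k \<noteq> 0})" by auto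
  ultimately show ?thesis by (meson bdd_above_finite bdd_above_mono)
qed

lemma supnorm_ge: "a \<in> c00 \<Longrightarrow> \<bar>a k\<bar> \<le> supnorm a"
  unfolding supnorm_def by (rule cSUP_upper[OF _ supnorm_bdd]) auto

lemma supnorm_nonneg: "a \<in> c00 \<Longrightarrow> 0 \<le> supnorm a"
  using supnorm_ge[of a 0] by auto

lemma adm_chain: "adm n l r \<Longrightarrow> i < i' \<Longrightarrow> i' < n \<Longrightarrow> r i < l i'"
proof (induction i' arbitrary: i)
  case 0 then show ?case by simp
next
  case (Suc i')
  then have a: "r i' < l (Suc i')" unfolding adm_def by auto
  show ?case
  proof (cases "i = i'")
    case True then show ?thesis using a by simp
  next
    case False
    then have "r i < l i'" using Suc by auto
    moreover have "l i' \<le> r i'" using Suc.prems unfolding adm_def by auto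
    ultimately show ?thesis using a by linarith
  qed
qed

definition l1 :: "(nat \<Rightarrow> real) \<Rightarrow> real" where
  "l1 a = (\<Sum>k\<in>{k. a k \<noteq> 0}. \<bar>a k\<bar>)"

lemma l1_nonneg: "0 \<le> l1 a" unfolding l1_def by (simp add: sum_nonneg)

lemma l1_ge: "a \<in> c00 \<Longrightarrow> \<bar>a k\<bar> \<le> l1 a"
proof (cases "a k = 0")
  case True then show ?thesis using l1_nonneg by simp
next
  case False
  assume "a \<in> c00"
  then show ?thesis unfolding l1_def c00_def
    using member_le_sum[of k "{k. a k \<noteq> 0}" "\<lambda>k. \<bar>a k\<bar>"] False by auto
qed

lemma l1_restr_sum:
  assumes "a \<in> c00" "adm N l r"
  shows "(\<Sum>i<N. l1 (restr {l i..r i} a)) \<le> l1 a"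
proof -
  let ?S = "{k. a k \<noteq> 0}"
  have fin: "finite ?S" using assms(1) unfolding c00_def by auto
  have eq: "\<And>i. l1 (restr {l i..r i} a) = (\<Sum>k\<in>?S \<inter> {l i..r i}. \<bar>a k\<bar>)"
    unfolding l1_def restr_def by (rule sum.cong) auto
  have "(\<Sum>i<N. (\<Sum>k\<in>?S \<inter> {l i..r i}. \<bar>a k\<bar>)) = (\<Sum>k\<in>(\<Union>i<N. ?S \<inter> {l i..r i}). \<bar>a k\<bar>)"
  proof (rule sum.UNION_disjoint[symmetric])
    show "finite {..<N}" by simp
    show "\<forall>i\<in>{..<N}. finite (?S \<inter> {l i..r i})" using fin by auto
    show "\<forall>i\<in>{..<N}. \<forall>j\<in>{..<N}. i \<noteq> j \<longrightarrow> (?S \<inter> {l i..r i}) \<inter> (?S \<inter> {l j..r j}) = {}"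
    proof (intro ballI impI)
      fix i j assume "i \<in> {..<N}" "j \<in> {..<N}" "i \<noteq> j"
      then consider "i < j" "j < N" | "j < i" "i < N" by fastforce
      then show "(?S \<inter> {l i..r i}) \<inter> (?S \<inter> {l j..r j}) = {}"
        by cases (use adm_chain[OF assms(2)] in fastforce)+
    qed
  qed
  also have "\<dots> \<le> (\<Sum>k\<in>?S. \<bar>a k\<bar>)"
    by (rule sum_mono2[OF fin]) auto
  finally have "(\<Sum>i<N. (\<Sum>k\<in>?S \<inter> {l i..r i}. \<bar>a k\<bar>)) \<le> l1 a" unfolding l1_def .
  then show ?thesis by (simp add: eq)
qed

lemma div_le_self: "1 \<le> d \<Longrightarrow> 0 \<le> (x::real) \<Longrightarrow> x / d \<le> x"
  using mult_left_mono[of 1 d x] by (simp add: divide_le_eq)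

lemma gmul_le: "0 < (g::real) \<Longrightarrow> g \<le> 1 \<Longrightarrow> S \<le> L \<Longrightarrow> 0 \<le> L \<Longrightarrow> g * S \<le> L"
proof (cases "S \<le> 0")
  case True
  assume "0 < g" "0 \<le> L"
  then show ?thesis using True mult_pos_neg[of g S] by (smt (verit) mult_nonneg_nonpos)
next
  case False
  assume "0 < g" "g \<le> 1" "S \<le> L"
  then show ?thesis using False mult_left_le_one_le[of S g] by linarith
qed

lemma holder_term:
  fixes f h A B p b :: real
  assumes "1 < p" "0 < b" "1/p + b = 1" "0 \<le> f" "0 \<le> h" "0 < A" "0 < B"
  shows "f * h powr b \<le> A powr (1/p) * B powr b * ((1/p) * (f powr p / A) + b * (h / B))"
proof (cases "f = 0 \<or> h = 0")
  case True
  then show ?thesis using assms by (auto intro!: mult_nonneg_nonneg add_nonneg_nonneg)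
next
  case False
  then have fp: "0 < f" "0 < h" using assms by auto
  have Y: "(f powr p / A) powr (1/p) * (h / B) powr b \<le> (1/p) * (f powr p / A) + b * (h / B)"
    using assms fp by (intro Youngs_inequality_0) auto
  have e1: "(f powr p / A) powr (1/p) = f / A powr (1/p)"
    using assms fp by (simp add: powr_divide powr_powr)
  have e2: "(h / B) powr b = h powr b / B powr b"
    using assms fp by (simp add: powr_divide)
  have "f * h powr b = A powr (1/p) * B powr b * ((f powr p / A) powr (1/p) * (h / B) powr b)"
    unfolding e1 e2 using assms by (simp add: field_simps)
  also have "\<dots> \<le> A powr (1/p) * B powr b * ((1/p) * (f powr p / A) + b * (h / B))"
    using Y by (intro mult_left_mono) auto
  finally show ?thesis .
qed

lemma holder:
  fixes f h :: "'a \<Rightarrow> real" and p b :: real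
  assumes X: "finite X" and pb: "1 < p" "0 < b" "1/p + b = 1"
    and nn: "\<forall>x\<in>X. 0 \<le> f x" "\<forall>x\<in>X. 0 \<le> h x"
  shows "(\<Sum>x\<in>X. f x * h x powr b) \<le> (\<Sum>x\<in>X. f x powr p) powr (1/p) * (\<Sum>x\<in>X. h x) powr b"
proof -
  define A where "A = (\<Sum>x\<in>X. f x powr p)"
  define B where "B = (\<Sum>x\<in>X. h x)"
  have A0: "0 \<le> A" unfolding A_def by (intro sum_nonneg) auto
  have B0: "0 \<le> B" unfolding B_def using nn by (intro sum_nonneg) auto
  show ?thesis
  proof (cases "A = 0 \<or> B = 0")
    case True
    then have "\<forall>x\<in>X. f x * h x powr b = 0"
    proof
      assume "A = 0"
      then have "\<forall>x\<in>X. f x powr p = 0" unfolding A_def using X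
        by (subst (asm) sum_nonneg_eq_0_iff) auto
      then show ?thesis by auto
    next
      assume "B = 0"
      then have "\<forall>x\<in>X. h x = 0" unfolding B_def using X nn
        by (subst (asm) sum_nonneg_eq_0_iff) auto
      then show ?thesis by auto
    qed
    then have "(\<Sum>x\<in>X. f x * h x powr b) = 0" by (intro sum.neutral) auto
    then show ?thesis unfolding A_def[symmetric] B_def[symmetric] by simp
  next
    case False
    then have Ap: "0 < A" and Bp: "0 < B" using A0 B0 by auto
    have "(\<Sum>x\<in>X. f x * h x powr b)
        \<le> (\<Sum>x\<in>X. A powr (1/p) * B powr b * ((1/p) * (f x powr p / A) + b * (h x / B)))"
      using nn pb Ap Bp by (intro sum_mono holder_term) auto
    also have "\<dots> = A powr (1/p) * B powr b * ((\<Sum>x\<in>X. (1/p) * (f x powr p / A)) + (\<Sum>x\<in>X. b * (h x / B)))"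
      by (simp add: sum_distrib_left[symmetric] sum.distrib)
    also have "\<dots> = A powr (1/p) * B powr b * ((1/p) * ((\<Sum>x\<in>X. f x powr p) / A) + b * ((\<Sum>x\<in>X. h x) / B))"
      by (simp add: sum_distrib_left[symmetric] sum_divide_distrib[symmetric])
    also have "\<dots> = A powr (1/p) * B powr b * ((1/p) * (A / A) + b * (B / B))"
      unfolding A_def B_def ..
    also have "\<dots> = A powr (1/p) * B powr b" using Ap Bp pb by simp
    finally show ?thesis unfolding A_def B_def .
  qed
qed

lemma Q_card:
  assumes blk: "\<forall>j j'. j < j' \<longrightarrow> br j < bl j'" and J: "finite (J::nat set)"
  shows "card {j\<in>J. {a..b} \<inter> {bl j..br j} \<noteq> {} \<and> \<not> {bl j..br j} \<subseteq> {a..b::nat}} \<le> 2"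
proof -
  have one: "card {j\<in>J. x \<in> {bl j..br j}} \<le> 1" for x
  proof -
    have "\<forall>j1\<in>{j\<in>J. x \<in> {bl j..br j}}. \<forall>j2\<in>{j\<in>J. x \<in> {bl j..br j}}. j1 = j2"
    proof (intro ballI)
      fix j1 j2 assume "j1 \<in> {j\<in>J. x \<in> {bl j..br j}}" "j2 \<in> {j\<in>J. x \<in> {bl j..br j}}"
      then show "j1 = j2" using blk by (metis (no_types, lifting) atLeastAtMost_iff linorder_neqE_nat mem_Collect_eq not_le order.strict_trans2 order_trans)
    qed
    then show ?thesis using card_le_Suc0_iff_eq[of "{j\<in>J. x \<in> {bl j..br j}}"] J by auto
  qed
  have sub: "{j\<in>J. {a..b} \<inter> {bl j..br j} \<noteq> {} \<and> \<not> {bl j..br j} \<subseteq> {a..b}}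
      \<subseteq> {j\<in>J. a \<in> {bl j..br j}} \<union> {j\<in>J. b \<in> {bl j..br j}}"
  proof
    fix j assume "j \<in> {j\<in>J. {a..b} \<inter> {bl j..br j} \<noteq> {} \<and> \<not> {bl j..br j} \<subseteq> {a..b}}"
    then have "j \<in> J" "max a (bl j) \<le> min b (br j)" "\<not> (a \<le> bl j \<and> br j \<le> b)"
      by (auto simp: subset_eq)
    then show "j \<in> {j\<in>J. a \<in> {bl j..br j}} \<union> {j\<in>J. b \<in> {bl j..br j}}" by auto
  qed
  have "card {j\<in>J. {a..b} \<inter> {bl j..br j} \<noteq> {} \<and> \<not> {bl j..br j} \<subseteq> {a..b}}
      \<le> card ({j\<in>J. a \<in> {bl j..br j}} \<union> {j\<in>J. b \<in> {bl j..br j}})"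
    using J by (intro card_mono[OF _ sub]) auto
  also have "\<dots> \<le> card {j\<in>J. a \<in> {bl j..br j}} + card {j\<in>J. b \<in> {bl j..br j}}" by (rule card_Un_le)
  also have "\<dots> \<le> 2" using one[of a] one[of b] by simp
  finally show ?thesis .
qed

lemma powr_inv_p: "0 \<le> X \<Longrightarrow> 0 < (p::real) \<Longrightarrow> (X powr (1/p)) powr p = X"
  by (cases "X = 0") (auto simp: powr_powr)

lemma powr_inv_p': "0 \<le> X \<Longrightarrow> 0 < (p::real) \<Longrightarrow> (X powr p) powr (1/p) = X"
  by (cases "X = 0") (auto simp: powr_powr)

lemma holder2:
  fixes p b X1 X2 Y1 Y2 :: real
  assumes pb: "1 < p" "0 < b" "1/p + b = 1" and nn: "0 \<le> X1" "0 \<le> X2" "0 \<le> Y1" "0 \<le> Y2"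
  shows "X1 powr (1/p) * Y1 powr b + X2 powr (1/p) * Y2 powr b \<le> (X1 + X2) powr (1/p) * (Y1 + Y2) powr b"
proof -
  let ?f = "\<lambda>i::nat. if i = 0 then X1 powr (1/p) else X2 powr (1/p)"
  let ?h = "\<lambda>i::nat. if i = 0 then Y1 else Y2"
  have "(\<Sum>i\<in>{0,1}. ?f i * ?h i powr b) \<le> (\<Sum>i\<in>{0,1}. ?f i powr p) powr (1/p) * (\<Sum>i\<in>{0,1}. ?h i) powr b"
    using nn pb by (intro holder) auto
  moreover have "(X1 powr (1/p)) powr p = X1" "(X2 powr (1/p)) powr p = X2"
    using nn pb by (simp_all add: powr_inv_p)
  ultimately show ?thesis by simp
qed

locale tis = fixes p g :: real assumes p1: "1 < p" and g0: "0 < g" and g1: "g \<le> 1"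
begin

definition ee where "ee = 1 / conj_exp p"

lemma ee: "ee = 1 - 1/p" "0 < ee" "ee < 1"
  using p1 by (auto simp: ee_def conj_exp_def field_simps)

definition ADM :: "(nat \<times> (nat \<Rightarrow> nat) \<times> (nat \<Rightarrow> nat)) set" where
  "ADM = {(n, l, r). adm n l r}"

definition famv where
  "famv m a nlr = (case nlr of (n, l, r) \<Rightarrow>
      (\<Sum>j<n. ti_iter p g m (restr {l j..r j} a)) / real n powr ee)"

lemma ti_Suc: "ti_iter p g (Suc m) a = max (supnorm a) (g * (SUP nlr\<in>ADM. famv m a nlr))"
  by (simp add: ADM_def famv_def ee_def)

lemma ti_0: "ti_iter p g 0 a = supnorm a" by simp

lemma ADM_ne: "ADM \<noteq> {}"
proof -
  have "(1, \<lambda>_. 0, \<lambda>_. 0) \<in> ADM" unfolding ADM_def adm_def by auto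
  then show ?thesis by auto
qed

lemma ti_nonneg: "a \<in> c00 \<Longrightarrow> 0 \<le> ti_iter p g m a"
  by (cases m) (auto simp: ti_Suc supnorm_nonneg intro: max.coboundedI1)

lemma powr_ge1: "adm n l r \<Longrightarrow> 1 \<le> real n powr ee"
  using ee(2) unfolding adm_def by (auto intro: ge_one_powr_ge_zero)

lemma ti_le_l1: "a \<in> c00 \<Longrightarrow> ti_iter p g m a \<le> l1 a"
proof (induction m arbitrary: a)
  case 0
  then show ?case unfolding ti_0 supnorm_def
    by (intro cSUP_least) (auto intro: l1_ge)
next
  case (Suc m)
  have "famv m a nlr \<le> l1 a" if "nlr \<in> ADM" for nlr
  proof -
    obtain N l r where nlr: "nlr = (N, l, r)" by (cases nlr)
    have ad: "adm N l r" using that nlr unfolding ADM_def by auto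
    have s0: "0 \<le> (\<Sum>j<N. ti_iter p g m (restr {l j..r j} a))"
      by (intro sum_nonneg ti_nonneg restr_c00 Suc.prems)
    have "(\<Sum>j<N. ti_iter p g m (restr {l j..r j} a)) \<le> (\<Sum>j<N. l1 (restr {l j..r j} a))"
      by (intro sum_mono Suc.IH restr_c00 Suc.prems)
    also have "\<dots> \<le> l1 a" by (rule l1_restr_sum[OF Suc.prems ad])
    finally have "(\<Sum>j<N. ti_iter p g m (restr {l j..r j} a)) \<le> l1 a" .
    moreover have "(\<Sum>j<N. ti_iter p g m (restr {l j..r j} a)) / real N powr ee
        \<le> (\<Sum>j<N. ti_iter p g m (restr {l j..r j} a))"
      using powr_ge1[OF ad] s0 by (rule div_le_self)
    ultimately show ?thesis unfolding nlr famv_def by simp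
  qed
  then have "(SUP nlr\<in>ADM. famv m a nlr) \<le> l1 a" by (intro cSUP_least ADM_ne)
  then have "g * (SUP nlr\<in>ADM. famv m a nlr) \<le> l1 a"
    using g0 g1 l1_nonneg[of a] by (intro gmul_le)
  moreover have "supnorm a \<le> l1 a" unfolding supnorm_def
    by (intro cSUP_least) (auto intro: l1_ge Suc.prems)
  ultimately show ?case unfolding ti_Suc by simp
qed


lemma famv_le_l1:
  assumes a: "a \<in> c00" and nlr: "nlr \<in> ADM"
  shows "famv m a nlr \<le> l1 a"
proof -
  obtain N l r where nlr: "nlr = (N, l, r)" by (cases nlr)
  have ad: "adm N l r" using assms nlr unfolding ADM_def by auto
  have s0: "0 \<le> (\<Sum>j<N. ti_iter p g m (restr {l j..r j} a))"
    by (intro sum_nonneg ti_nonneg restr_c00 a)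
  have "(\<Sum>j<N. ti_iter p g m (restr {l j..r j} a)) \<le> (\<Sum>j<N. l1 (restr {l j..r j} a))"
    by (intro sum_mono ti_le_l1 restr_c00 a)
  also have "\<dots> \<le> l1 a" by (rule l1_restr_sum[OF a ad])
  finally have "(\<Sum>j<N. ti_iter p g m (restr {l j..r j} a)) \<le> l1 a" .
  moreover have "(\<Sum>j<N. ti_iter p g m (restr {l j..r j} a)) / real N powr ee
      \<le> (\<Sum>j<N. ti_iter p g m (restr {l j..r j} a))"
    using powr_ge1[OF ad] s0 by (rule div_le_self)
  ultimately show ?thesis unfolding nlr famv_def by simp
qed

lemma fam_bdd: "a \<in> c00 \<Longrightarrow> bdd_above (famv m a ` ADM)"
  by (rule bdd_aboveI2[where M="l1 a"]) (rule famv_le_l1)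

lemma ti_ge_fam: "a \<in> c00 \<Longrightarrow> nlr \<in> ADM \<Longrightarrow> g * famv m a nlr \<le> ti_iter p g (Suc m) a"
  unfolding ti_Suc using g0
  by (intro max.coboundedI2 mult_left_mono cSUP_upper fam_bdd) auto

lemma ti_le_norm: "a \<in> c00 \<Longrightarrow> ti_iter p g m a \<le> ti_norm p g a"
  unfolding ti_norm_def
  by (intro cSUP_upper bdd_aboveI2[where M="l1 a"] ti_le_l1) auto

lemma norm_le: "(\<And>m. ti_iter p g m a \<le> B) \<Longrightarrow> ti_norm p g a \<le> B"
  unfolding ti_norm_def by (intro cSUP_least) auto

lemma supnorm_dom:
  assumes "finite T" "\<forall>t\<in>T. w t \<in> c00" "\<forall>t\<in>T. 0 \<le> \<alpha> t"
    "\<forall>k. \<bar>u k\<bar> \<le> (\<Sum>t\<in>T. \<alpha> t * \<bar>w t k\<bar>)"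
  shows "supnorm u \<le> (\<Sum>t\<in>T. \<alpha> t * supnorm (w t))"
  unfolding supnorm_def[of u]
proof (rule cSUP_least)
  fix k
  have "\<bar>u k\<bar> \<le> (\<Sum>t\<in>T. \<alpha> t * \<bar>w t k\<bar>)" using assms by auto
  also have "\<dots> \<le> (\<Sum>t\<in>T. \<alpha> t * supnorm (w t))"
    using assms by (intro sum_mono mult_left_mono supnorm_ge) auto
  finally show "\<bar>u k\<bar> \<le> (\<Sum>t\<in>T. \<alpha> t * supnorm (w t))" .
qed auto

lemma ti_dom:
  assumes "finite T" "\<forall>t\<in>T. w t \<in> c00" "\<forall>t\<in>T. 0 \<le> \<alpha> t"
    "\<forall>k. \<bar>u k\<bar> \<le> (\<Sum>t\<in>T. \<alpha> t * \<bar>w t k\<bar>)"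
  shows "ti_iter p g m u \<le> (\<Sum>t\<in>T. \<alpha> t * ti_iter p g m (w t))"
  using assms(2,4)
proof (induction m arbitrary: u w)
  case 0
  then show ?case using supnorm_dom[OF assms(1) _ assms(3)] by simp
next
  case (Suc m)
  have fam: "famv m u nlr \<le> (\<Sum>t\<in>T. \<alpha> t * (SUP nlr\<in>ADM. famv m (w t) nlr))" if nlr: "nlr \<in> ADM" for nlr
  proof -
    obtain N l r where nlr': "nlr = (N, l, r)" by (cases nlr)
    have "(\<Sum>i<N. ti_iter p g m (restr {l i..r i} u))
        \<le> (\<Sum>i<N. \<Sum>t\<in>T. \<alpha> t * ti_iter p g m (restr {l i..r i} (w t)))"
    proof (rule sum_mono)
      fix i
      show "ti_iter p g m (restr {l i..r i} u) \<le> (\<Sum>t\<in>T. \<alpha> t * ti_iter p g m (restr {l i..r i} (w t)))"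
      proof (rule Suc.IH)
        show "\<forall>t\<in>T. restr {l i..r i} (w t) \<in> c00" using Suc.prems by (auto intro: restr_c00)
        show "\<forall>k. \<bar>restr {l i..r i} u k\<bar> \<le> (\<Sum>t\<in>T. \<alpha> t * \<bar>restr {l i..r i} (w t) k\<bar>)"
          using Suc.prems assms(3) unfolding restr_def by (auto intro: sum_nonneg)
      qed
    qed
    also have "\<dots> = (\<Sum>t\<in>T. \<alpha> t * (\<Sum>i<N. ti_iter p g m (restr {l i..r i} (w t))))"
      by (subst sum.swap) (simp add: sum_distrib_left)
    finally have "famv m u nlr \<le> (\<Sum>t\<in>T. \<alpha> t * (\<Sum>i<N. ti_iter p g m (restr {l i..r i} (w t)))) / real N powr ee"
      unfolding nlr' famv_def by (simp add: divide_right_mono)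
    also have "\<dots> = (\<Sum>t\<in>T. \<alpha> t * famv m (w t) nlr)"
      unfolding nlr' famv_def by (simp add: sum_divide_distrib[symmetric] times_divide_eq_right)
    also have "\<dots> \<le> (\<Sum>t\<in>T. \<alpha> t * (SUP nlr\<in>ADM. famv m (w t) nlr))"
      using Suc.prems assms(3) nlr by (intro sum_mono mult_left_mono cSUP_upper fam_bdd) auto
    finally show ?thesis .
  qed
  have S: "(SUP nlr\<in>ADM. famv m u nlr) \<le> (\<Sum>t\<in>T. \<alpha> t * (SUP nlr\<in>ADM. famv m (w t) nlr))"
    using fam by (intro cSUP_least ADM_ne) auto
  have A: "supnorm u \<le> (\<Sum>t\<in>T. \<alpha> t * ti_iter p g (Suc m) (w t))"
  proof -
    have "supnorm u \<le> (\<Sum>t\<in>T. \<alpha> t * supnorm (w t))"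
      using supnorm_dom[OF assms(1) _ assms(3)] Suc.prems by simp
    also have "\<dots> \<le> (\<Sum>t\<in>T. \<alpha> t * ti_iter p g (Suc m) (w t))"
      using assms(3) unfolding ti_Suc by (intro sum_mono mult_left_mono) auto
    finally show ?thesis .
  qed
  have B: "g * (SUP nlr\<in>ADM. famv m u nlr) \<le> (\<Sum>t\<in>T. \<alpha> t * ti_iter p g (Suc m) (w t))"
  proof -
    have "g * (SUP nlr\<in>ADM. famv m u nlr) \<le> g * (\<Sum>t\<in>T. \<alpha> t * (SUP nlr\<in>ADM. famv m (w t) nlr))"
      using S g0 by simp
    also have "\<dots> = (\<Sum>t\<in>T. \<alpha> t * (g * (SUP nlr\<in>ADM. famv m (w t) nlr)))"
      by (simp add: sum_distrib_left mult.left_commute)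
    also have "\<dots> \<le> (\<Sum>t\<in>T. \<alpha> t * ti_iter p g (Suc m) (w t))"
      using assms(3) unfolding ti_Suc by (intro sum_mono mult_left_mono) auto
    finally show ?thesis .
  qed
  show ?case using A B unfolding ti_Suc[of m u] by simp
qed


lemma reindex:
  assumes u: "u \<in> c00" and I: "finite (I::nat set)" and ne: "\<forall>i\<in>I. l' i \<le> r' i"
    and ord: "\<forall>i\<in>I. \<forall>i'\<in>I. i < i' \<longrightarrow> r' i < l' i'"
  shows "g * (\<Sum>i\<in>I. ti_iter p g m (restr {l' i..r' i} u)) \<le> real (card I) powr ee * ti_iter p g (Suc m) u"
proof (cases "I = {}")
  case True then show ?thesis by simp
next
  case False
  define L where "L = sorted_list_of_set I"
  define N where "N = card I"
  have len: "length L = N" unfolding L_def N_def by simp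
  have setL: "set L = I" unfolding L_def using I by simp
  have dist: "distinct L" unfolding L_def by simp
  have sw: "sorted_wrt (<) L" unfolding L_def by simp
  have N1: "1 \<le> N" unfolding N_def using I False by (simp add: Suc_leI card_gt_0_iff)
  have inI: "L ! j \<in> I" if "j < N" for j using that len setL nth_mem by blast
  have ad: "adm N (\<lambda>j. l' (L ! j)) (\<lambda>j. r' (L ! j))"
    unfolding adm_def
  proof (intro conjI allI impI)
    show "1 \<le> N" by (rule N1)
    fix j
    show "j < N \<Longrightarrow> l' (L ! j) \<le> r' (L ! j)" using ne inI by auto
    assume "Suc j < N"
    then have "L ! j < L ! Suc j" using sorted_wrt_nth_less[OF sw, of j "Suc j"] len by simp
    then show "r' (L ! j) < l' (L ! Suc j)" using ord inI \<open>Suc j < N\<close> by auto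
  qed
  have bij: "bij_betw ((!) L) {..<N} I" using bij_betw_nth[OF dist _ setL[symmetric]] len by simp
  have sumeq: "(\<Sum>i\<in>I. ti_iter p g m (restr {l' i..r' i} u)) = (\<Sum>j<N. ti_iter p g m (restr {l' (L ! j)..r' (L ! j)} u))"
    using sum.reindex_bij_betw[OF bij, of "\<lambda>i. ti_iter p g m (restr {l' i..r' i} u)"] by simp
  have mem: "(N, (\<lambda>j. l' (L ! j)), (\<lambda>j. r' (L ! j))) \<in> ADM" unfolding ADM_def using ad by simp
  have pos: "0 < real N powr ee" using N1 by simp
  have "g * (\<Sum>j<N. ti_iter p g m (restr {l' (L ! j)..r' (L ! j)} u))
      = real N powr ee * (g * famv m u (N, (\<lambda>j. l' (L ! j)), (\<lambda>j. r' (L ! j))))"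
    unfolding famv_def using pos by simp
  also have "\<dots> \<le> real N powr ee * ti_iter p g (Suc m) u"
    using ti_ge_fam[OF u mem] pos by (intro mult_left_mono) auto
  finally show ?thesis unfolding sumeq N_def .
qed


lemma core:
  assumes g3: "g * 3 powr ee \<le> 1"
    and blk1: "\<forall>j. bl j \<le> br j" and blk2: "\<forall>j j'. j < j' \<longrightarrow> br j < bl j'"
    and ad: "adm N l r" and v: "v \<in> c00" and J: "finite (J::nat set)"
    and supp: "\<forall>k. v k \<noteq> 0 \<longrightarrow> (\<exists>j\<in>J. k \<in> {bl j..br j})"
    and sb: "\<forall>j\<in>J. \<forall>k'. ti_iter p g k' (restr {bl j..br j} v) \<le> s j"
    and s0: "\<forall>j. 0 \<le> s j"
    and IH: "\<And>v' J'. v' \<in> c00 \<Longrightarrow> finite J' \<Longrightarrow> (\<forall>k. v' k \<noteq> 0 \<longrightarrow> (\<exists>j\<in>J'. k \<in> {bl j..br j}))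
       \<Longrightarrow> (\<forall>j\<in>J'. \<forall>k'. ti_iter p g k' (restr {bl j..br j} v') \<le> s j)
       \<Longrightarrow> ti_iter p g m v' \<le> 3 powr ee * (\<Sum>j\<in>J'. s j powr p) powr (1/p)"
  shows "g * (\<Sum>i<N. ti_iter p g m (restr {l i..r i} v))
     \<le> 3 powr ee * real N powr ee * (\<Sum>j\<in>J. s j powr p) powr (1/p)"
proof -
  define R where "R i j = ({l i..r i} \<inter> {bl j..br j} \<noteq> {} \<and> \<not> {bl j..br j} \<subseteq> {l i..r i})" for i j
  define Q where "Q i = {j\<in>J. R i j}" for i
  define F where "F i = {j\<in>J. {bl j..br j} \<subseteq> {l i..r i}}" for i
  define P where "P i j = ti_iter p g m (restr {max (l i) (bl j)..min (r i) (br j)} v)" for i j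
  define U where "U i = (\<Union>j\<in>F i. {bl j..br j})" for i
  define M where "M i = ti_iter p g m (restr (U i) v)" for i
  define t where "t i = (\<Sum>j\<in>F i. s j powr p) powr (1/p)" for i
  define I where "I j = {i\<in>{..<N}. R i j}" for j
  define c where "c j = real (card (I j))" for j
  have finQ: "finite (Q i)" for i unfolding Q_def using J by auto
  have finF: "finite (F i)" for i unfolding F_def using J by auto
  have pp: "1 < p" "0 < ee" "1/p + ee = 1" using p1 ee by auto
  have chain: "i < i' \<Longrightarrow> i' < N \<Longrightarrow> r i < l i'" for i i' using adm_chain[OF ad] by blast
  have step1: "ti_iter p g m (restr {l i..r i} v) \<le> (\<Sum>j\<in>Q i. P i j) + M i" for i
  proof -
    let ?w = "case_option (restr (U i) v) (\<lambda>j. restr {max (l i) (bl j)..min (r i) (br j)} v)"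
    let ?T = "insert None (Some ` Q i)"
    have sumT: "(\<Sum>x\<in>?T. f x) = f None + (\<Sum>j\<in>Q i. f (Some j))" for f :: "nat option \<Rightarrow> real"
      using finQ[of i] by (simp add: sum.reindex)
    have "ti_iter p g m (restr {l i..r i} v) \<le> (\<Sum>x\<in>?T. 1 * ti_iter p g m (?w x))"
    proof (rule ti_dom)
      show "finite ?T" using finQ by simp
      show "\<forall>x\<in>?T. ?w x \<in> c00" using v by (auto intro: restr_c00)
      show "\<forall>x\<in>?T. (0::real) \<le> 1" by simp
      show "\<forall>k. \<bar>restr {l i..r i} v k\<bar> \<le> (\<Sum>x\<in>?T. 1 * \<bar>?w x k\<bar>)"
      proof
        fix k
        have nn: "0 \<le> (\<Sum>j\<in>Q i. \<bar>restr {max (l i) (bl j)..min (r i) (br j)} v k\<bar>)"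
          by (intro sum_nonneg) auto
        show "\<bar>restr {l i..r i} v k\<bar> \<le> (\<Sum>x\<in>?T. 1 * \<bar>?w x k\<bar>)"
        proof (cases "k \<in> {l i..r i} \<and> v k \<noteq> 0")
          case False
          then have "restr {l i..r i} v k = 0" unfolding restr_def by auto
          then show ?thesis unfolding sumT using nn by simp
        next
          case True
          then obtain j where j: "j \<in> J" "k \<in> {bl j..br j}" using supp by auto
          show ?thesis
          proof (cases "{bl j..br j} \<subseteq> {l i..r i}")
            case True
            then have "j \<in> F i" unfolding F_def using j by auto
            then have "k \<in> U i" unfolding U_def using j by auto
            then show ?thesis unfolding sumT using nn \<open>k \<in> {l i..r i} \<and> v k \<noteq> 0\<close>
              by (simp add: restr_def)
          next
            case False
            then have "j \<in> Q i" unfolding Q_def R_def using j True by auto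
            have "\<bar>restr {l i..r i} v k\<bar> = \<bar>restr {max (l i) (bl j)..min (r i) (br j)} v k\<bar>"
              using j True unfolding restr_def by auto
            also have "\<dots> \<le> (\<Sum>j\<in>Q i. \<bar>restr {max (l i) (bl j)..min (r i) (br j)} v k\<bar>)"
              using \<open>j \<in> Q i\<close> finQ by (intro member_le_sum) auto
            finally show ?thesis unfolding sumT by simp
          qed
        qed
      qed
    qed
    then show ?thesis unfolding sumT P_def M_def by simp
  qed
  have step2: "M i \<le> 3 powr ee * t i" for i
    unfolding M_def t_def
  proof (rule IH)
    show "restr (U i) v \<in> c00" using v by (rule restr_c00)
    show "finite (F i)" by (rule finF)
    show "\<forall>k. restr (U i) v k \<noteq> 0 \<longrightarrow> (\<exists>j\<in>F i. k \<in> {bl j..br j})"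
      unfolding restr_def U_def by auto
    show "\<forall>j\<in>F i. \<forall>k'. ti_iter p g k' (restr {bl j..br j} (restr (U i) v)) \<le> s j"
    proof (intro ballI allI)
      fix j k' assume "j \<in> F i"
      then have "{bl j..br j} \<inter> U i = {bl j..br j}" "j \<in> J" unfolding U_def F_def by auto
      then show "ti_iter p g k' (restr {bl j..br j} (restr (U i) v)) \<le> s j"
        using sb by (simp add: restr_restr)
    qed
  qed
  have step3: "g * (\<Sum>i\<in>I j. P i j) \<le> c j powr ee * s j" if jJ: "j \<in> J" for j
  proof -
    have fI: "finite (I j)" unfolding I_def by auto
    have eqr: "restr {max (l i) (bl j)..min (r i) (br j)} (restr {bl j..br j} v)
        = restr {max (l i) (bl j)..min (r i) (br j)} v" for i
      unfolding restr_restr by (rule arg_cong[where f="\<lambda>X. restr X v"]) auto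
    have "g * (\<Sum>i\<in>I j. P i j) = g * (\<Sum>i\<in>I j. ti_iter p g m (restr {max (l i) (bl j)..min (r i) (br j)} (restr {bl j..br j} v)))"
      unfolding P_def eqr ..
    also have "\<dots> \<le> real (card (I j)) powr ee * ti_iter p g (Suc m) (restr {bl j..br j} v)"
    proof (rule reindex)
      show "restr {bl j..br j} v \<in> c00" using v by (rule restr_c00)
      show "finite (I j)" by (rule fI)
      show "\<forall>i\<in>I j. max (l i) (bl j) \<le> min (r i) (br j)"
        unfolding I_def R_def by auto
      show "\<forall>i\<in>I j. \<forall>i'\<in>I j. i < i' \<longrightarrow> min (r i) (br j) < max (l i') (bl j)"
        unfolding I_def using chain by (auto simp: min_less_iff_disj less_max_iff_disj)
    qed
    also have "\<dots> \<le> c j powr ee * s j"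
    proof -
      have tsb: "ti_iter p g (Suc m) (restr {bl j..br j} v) \<le> s j" using sb jJ by blast
      show ?thesis unfolding c_def by (rule mult_left_mono[OF tsb]) simp
    qed
    finally show ?thesis .
  qed
  have step4: "(\<Sum>i<N. \<Sum>j\<in>Q i. P i j) = (\<Sum>j\<in>J. \<Sum>i\<in>I j. P i j)"
    unfolding Q_def I_def using J by (intro sum.swap_restrict) auto
  have t0: "0 \<le> t i" for i unfolding t_def by simp
  have step5: "g * (\<Sum>i<N. ti_iter p g m (restr {l i..r i} v)) \<le> (\<Sum>j\<in>J. c j powr ee * s j) + (\<Sum>i<N. t i)"
  proof -
    have "g * (\<Sum>i<N. ti_iter p g m (restr {l i..r i} v)) \<le> g * (\<Sum>i<N. (\<Sum>j\<in>Q i. P i j) + M i)"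
      using g0 step1 by (intro mult_left_mono sum_mono) auto
    also have "\<dots> = (\<Sum>j\<in>J. g * (\<Sum>i\<in>I j. P i j)) + (\<Sum>i<N. g * M i)"
      by (simp add: sum.distrib step4 distrib_left sum_distrib_left)
    also have "\<dots> \<le> (\<Sum>j\<in>J. c j powr ee * s j) + (\<Sum>i<N. t i)"
    proof (intro add_mono sum_mono)
      fix j assume "j \<in> J" then show "g * (\<Sum>i\<in>I j. P i j) \<le> c j powr ee * s j" by (rule step3)
    next
      fix i
      have "g * M i \<le> g * (3 powr ee * t i)" using step2 g0 by (intro mult_left_mono) auto
      also have "\<dots> = (g * 3 powr ee) * t i" by simp
      also have "\<dots> \<le> t i" using g3 t0[of i] g0 by (intro mult_left_le_one_le) auto
      finally show "g * M i \<le> t i" .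
    qed
    finally show ?thesis .
  qed
  define J1 where "J1 = {j\<in>J. c j \<noteq> 0}"
  define N1 where "N1 = {i\<in>{..<N}. F i \<noteq> {}}"
  define X1 where "X1 = (\<Sum>j\<in>J1. s j powr p)"
  define X2 where "X2 = (\<Sum>i\<in>N1. t i powr p)"
  define Y1 where "Y1 = (\<Sum>j\<in>J1. c j)"
  define Y2 where "Y2 = (\<Sum>i\<in>N1. (1::real))"
  define Sp where "Sp = (\<Sum>j\<in>J. s j powr p)"
  have J1J: "J1 \<subseteq> J" unfolding J1_def by auto
  have finJ1: "finite J1" by (rule finite_subset[OF J1J J])
  have finN1: "finite N1" unfolding N1_def by auto
  have c0: "0 \<le> c j" for j unfolding c_def by simp
  have h1: "(\<Sum>j\<in>J. c j powr ee * s j) \<le> X1 powr (1/p) * Y1 powr ee"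
  proof -
    have "(\<Sum>j\<in>J. c j powr ee * s j) = (\<Sum>j\<in>J1. s j * c j powr ee)"
      by (rule sum.mono_neutral_cong_right[OF J J1J]) (auto simp: J1_def)
    also have "\<dots> \<le> X1 powr (1/p) * Y1 powr ee"
      unfolding X1_def Y1_def using finJ1 pp s0 c0 by (intro holder) auto
    finally show ?thesis .
  qed
  have h2: "(\<Sum>i<N. t i) \<le> X2 powr (1/p) * Y2 powr ee"
  proof -
    have "(\<Sum>i<N. t i) = (\<Sum>i\<in>N1. t i * 1 powr ee)"
      by (rule sum.mono_neutral_cong_right) (auto simp: N1_def t_def)
    also have "\<dots> \<le> X2 powr (1/p) * Y2 powr ee"
      unfolding X2_def Y2_def using finN1 pp t0 by (intro holder) auto
    finally show ?thesis .
  qed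
  have X10: "0 \<le> X1" unfolding X1_def by (intro sum_nonneg) auto
  have X20: "0 \<le> X2" unfolding X2_def by (intro sum_nonneg) auto
  have Y10: "0 \<le> Y1" unfolding Y1_def using c0 by (intro sum_nonneg) auto
  have Y20: "0 \<le> Y2" unfolding Y2_def by (intro sum_nonneg) auto
  have h3: "X1 powr (1/p) * Y1 powr ee + X2 powr (1/p) * Y2 powr ee \<le> (X1 + X2) powr (1/p) * (Y1 + Y2) powr ee"
    using holder2[OF pp X10 X20 Y10 Y20] .
  have disjF: "F i \<inter> F i' = {}" if "i \<in> N1" "i' \<in> N1" "i \<noteq> i'" for i i'
  proof (rule ccontr)
    assume "F i \<inter> F i' \<noteq> {}"
    then obtain j where "j \<in> F i" "j \<in> F i'" by auto
    then have "bl j \<in> {l i..r i}" "bl j \<in> {l i'..r i'}" using blk1[rule_format, of j] unfolding F_def by (auto intro: order_trans)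
    moreover have "i < N" "i' < N" using that unfolding N1_def by auto
    ultimately show False
    proof (cases "i < i'")
      case True
      then have "r i < l i'" using chain \<open>i' < N\<close> by blast
      then show False using \<open>bl j \<in> {l i..r i}\<close> \<open>bl j \<in> {l i'..r i'}\<close> by auto
    next
      case False
      then have "i' < i" using that(3) by auto
      then have "r i' < l i" using chain \<open>i < N\<close> by blast
      then show False using \<open>bl j \<in> {l i..r i}\<close> \<open>bl j \<in> {l i'..r i'}\<close> by auto
    qed
  qed
  have disjJ1: "J1 \<inter> (\<Union>i\<in>N1. F i) = {}"
  proof (rule ccontr)
    assume "J1 \<inter> (\<Union>i\<in>N1. F i) \<noteq> {}"
    then obtain j i where j1: "j \<in> J1" and i: "i \<in> N1" "j \<in> F i" by auto
    then have "I j \<noteq> {}" unfolding J1_def c_def by auto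
    then obtain i' where i': "i' < N" "R i' j" unfolding I_def by auto
    then obtain k where k: "k \<in> {l i'..r i'}" "k \<in> {bl j..br j}" unfolding R_def by blast
    have sub: "{bl j..br j} \<subseteq> {l i..r i}" using i unfolding F_def by auto
    have "i \<noteq> i'" using i' sub unfolding R_def by auto
    moreover have "i < N" using i unfolding N1_def by auto
    moreover have "k \<in> {l i..r i}" using k sub by auto
    ultimately show False
    proof (cases "i < i'")
      case True
      then have "r i < l i'" using chain \<open>i' < N\<close> by blast
      then show False using k \<open>k \<in> {l i..r i}\<close> by auto
    next
      case False
      then have "i' < i" using \<open>i \<noteq> i'\<close> by auto
      then have "r i' < l i" using chain \<open>i < N\<close> by blast
      then show False using k \<open>k \<in> {l i..r i}\<close> by auto
    qed
  qed
  have X: "X1 + X2 \<le> Sp"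
  proof -
    have "X2 = (\<Sum>i\<in>N1. \<Sum>j\<in>F i. s j powr p)"
      unfolding X2_def t_def using pp by (intro sum.cong refl powr_inv_p sum_nonneg) auto
    also have "\<dots> = (\<Sum>j\<in>(\<Union>i\<in>N1. F i). s j powr p)"
      using finN1 finF disjF by (intro sum.UNION_disjoint[symmetric]) auto
    finally have "X1 + X2 = (\<Sum>j\<in>J1 \<union> (\<Union>i\<in>N1. F i). s j powr p)"
      unfolding X1_def using finJ1 finN1 finF disjJ1 by (subst sum.union_disjoint) auto
    also have "\<dots> \<le> Sp" unfolding Sp_def
      using J J1J by (intro sum_mono2) (auto simp: F_def)
    finally show ?thesis .
  qed
  have Y: "Y1 + Y2 \<le> 3 * real N"
  proof -
    have "Y1 = (\<Sum>j\<in>J. c j)"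
      unfolding Y1_def by (rule sum.mono_neutral_left[OF J J1J]) (auto simp: J1_def)
    also have "\<dots> = real (\<Sum>j\<in>J. card (I j))" unfolding c_def by simp
    also have "(\<Sum>j\<in>J. card (I j)) = (\<Sum>i<N. card (Q i))"
    proof -
      have "(\<Sum>i<N. \<Sum>j\<in>Q i. (1::nat)) = (\<Sum>j\<in>J. \<Sum>i\<in>I j. 1)"
        unfolding Q_def I_def using J by (intro sum.swap_restrict) auto
      then show ?thesis by simp
    qed
    also have "(\<Sum>i<N. card (Q i)) \<le> (\<Sum>i<N. 2)"
      unfolding Q_def R_def using Q_card[OF blk2 J] by (intro sum_mono) auto
    finally have "Y1 \<le> 2 * real N" by simp
    moreover have "Y2 \<le> real N"
    proof -
      have "Y2 = real (card N1)" unfolding Y2_def by simp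
      moreover have "card N1 \<le> N" unfolding N1_def
        using card_mono[of "{..<N}" "{i \<in> {..<N}. F i \<noteq> {}}"] by auto
      ultimately show ?thesis by simp
    qed
    ultimately show ?thesis by simp
  qed
  have "g * (\<Sum>i<N. ti_iter p g m (restr {l i..r i} v)) \<le> (X1 + X2) powr (1/p) * (Y1 + Y2) powr ee"
    using step5 h1 h2 h3 by linarith
  also have "\<dots> \<le> Sp powr (1/p) * (3 * real N) powr ee"
    using X Y X10 X20 Y10 Y20 pp by (intro mult_mono powr_mono2) auto
  also have "\<dots> = 3 powr ee * real N powr ee * Sp powr (1/p)"
    by (simp add: powr_mult)
  finally show ?thesis unfolding Sp_def .
qed


lemma sup_part:
  assumes s0: "\<forall>j. 0 \<le> s j" and v: "v \<in> c00" and J: "finite (J::nat set)"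
    and supp: "\<forall>k. v k \<noteq> 0 \<longrightarrow> (\<exists>j\<in>J. k \<in> {bl j..br j})"
    and sb: "\<forall>j\<in>J. \<forall>k'. ti_iter p g k' (restr {bl j..br j} v) \<le> s j"
  shows "supnorm v \<le> 3 powr ee * (\<Sum>j\<in>J. s j powr p) powr (1/p)"
  unfolding supnorm_def[of v]
proof (rule cSUP_least)
  fix k
  have R0: "0 \<le> 3 powr ee * (\<Sum>j\<in>J. s j powr p) powr (1/p)" by simp
  have three: "1 \<le> 3 powr ee" using ee by (intro ge_one_powr_ge_zero) auto
  show "\<bar>v k\<bar> \<le> 3 powr ee * (\<Sum>j\<in>J. s j powr p) powr (1/p)"
  proof (cases "v k = 0")
    case True then show ?thesis using R0 by simp
  next
    case False
    then obtain j where j: "j \<in> J" "k \<in> {bl j..br j}" using supp by auto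
    have "\<bar>v k\<bar> = \<bar>restr {bl j..br j} v k\<bar>" using j unfolding restr_def by simp
    also have "\<dots> \<le> supnorm (restr {bl j..br j} v)" using v by (intro supnorm_ge restr_c00)
    also have "\<dots> \<le> s j" using sb j ti_0 by metis
    also have "\<dots> = (s j powr p) powr (1/p)" using s0 p1 by (simp add: powr_inv_p')
    also have "\<dots> \<le> (\<Sum>j\<in>J. s j powr p) powr (1/p)"
      using p1 j J by (intro powr_mono2 member_le_sum) auto
    also have "\<dots> \<le> 3 powr ee * (\<Sum>j\<in>J. s j powr p) powr (1/p)"
      using three mult_right_mono[OF three, of "(\<Sum>j\<in>J. s j powr p) powr (1/p)"] by simp
    finally show ?thesis .
  qed
qed auto

lemma UE:
  assumes g3: "g * 3 powr ee \<le> 1"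
    and blk1: "\<forall>j. bl j \<le> br j" and blk2: "\<forall>j j'. j < j' \<longrightarrow> br j < bl j'"
    and s0: "\<forall>j. 0 \<le> s j"
  shows "v \<in> c00 \<Longrightarrow> finite (J::nat set) \<Longrightarrow> (\<forall>k. v k \<noteq> 0 \<longrightarrow> (\<exists>j\<in>J. k \<in> {bl j..br j}))
       \<Longrightarrow> (\<forall>j\<in>J. \<forall>k'. ti_iter p g k' (restr {bl j..br j} v) \<le> s j)
       \<Longrightarrow> ti_iter p g m v \<le> 3 powr ee * (\<Sum>j\<in>J. s j powr p) powr (1/p)"
proof (induction m arbitrary: v J)
  case 0
  then show ?case using sup_part[OF s0] by simp
next
  case (Suc m)
  let ?RHS = "3 powr ee * (\<Sum>j\<in>J. s j powr p) powr (1/p)"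
  have A: "supnorm v \<le> ?RHS" using sup_part[OF s0 Suc.prems] .
  have "famv m v nlr \<le> ?RHS / g" if "nlr \<in> ADM" for nlr
  proof -
    obtain N l r where nlr: "nlr = (N, l, r)" by (cases nlr)
    have ad: "adm N l r" using that nlr unfolding ADM_def by auto
    have "g * (\<Sum>i<N. ti_iter p g m (restr {l i..r i} v)) \<le> 3 powr ee * real N powr ee * (\<Sum>j\<in>J. s j powr p) powr (1/p)"
      by (rule core[OF g3 blk1 blk2 ad Suc.prems(1,2,3,4) s0 Suc.IH]) auto
    moreover have "0 < real N powr ee" using ad unfolding adm_def by auto
    ultimately show ?thesis unfolding nlr famv_def using g0
      by (simp add: field_simps)
  qed
  then have "(SUP nlr\<in>ADM. famv m v nlr) \<le> ?RHS / g" by (intro cSUP_least ADM_ne)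
  then have B: "g * (SUP nlr\<in>ADM. famv m v nlr) \<le> ?RHS" using g0 by (simp add: field_simps)
  show ?case unfolding ti_Suc using A B by simp
qed


lemma ti_dom1:
  assumes "w \<in> c00" "0 \<le> \<alpha>" "\<forall>k. \<bar>u k\<bar> \<le> \<alpha> * \<bar>w k\<bar>"
  shows "ti_iter p g m u \<le> \<alpha> * ti_iter p g m w"
  using ti_dom[of "{()}" "\<lambda>_. w" "\<lambda>_. \<alpha>" u m] assms by simp

lemma ti_norm_le_l1: "a \<in> c00 \<Longrightarrow> ti_norm p g a \<le> l1 a"
  by (intro norm_le ti_le_l1)

lemma zero_c00: "(\<lambda>_. 0) \<in> c00" unfolding c00_def by simp

lemma zero_norm: "ti_norm p g (\<lambda>_. 0) \<le> 1"
  using ti_norm_le_l1[OF zero_c00] unfolding l1_def by simp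

definition DS where "DS = {b \<in> c00. ti_norm p g b \<le> 1}"

lemma dual_eq: "ti_dual_norm p g f = (SUP b\<in>DS. \<bar>\<Sum>k\<in>{k. f k \<noteq> 0}. f k * b k\<bar>)"
  unfolding ti_dual_norm_def DS_def ..

lemma DS_ne: "(\<lambda>_. 0) \<in> DS" unfolding DS_def using zero_c00 zero_norm by simp

lemma dual_bdd:
  assumes "finite {k. f k \<noteq> 0}"
  shows "bdd_above ((\<lambda>b. \<bar>\<Sum>k\<in>{k. f k \<noteq> 0}. f k * b k\<bar>) ` DS)"
proof (rule bdd_aboveI2)
  fix b assume "b \<in> DS"
  then have b: "b \<in> c00" "ti_norm p g b \<le> 1" unfolding DS_def by auto
  have bk: "\<bar>b k\<bar> \<le> 1" for k
    using supnorm_ge[OF b(1), of k] ti_le_norm[OF b(1), of 0] b(2) by simp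
  have "\<bar>\<Sum>k\<in>{k. f k \<noteq> 0}. f k * b k\<bar> \<le> (\<Sum>k\<in>{k. f k \<noteq> 0}. \<bar>f k * b k\<bar>)"
    by (rule sum_abs)
  also have "\<dots> \<le> (\<Sum>k\<in>{k. f k \<noteq> 0}. \<bar>f k\<bar>)"
    using bk by (intro sum_mono) (simp add: abs_mult mult_left_le)
  finally show "\<bar>\<Sum>k\<in>{k. f k \<noteq> 0}. f k * b k\<bar> \<le> (\<Sum>k\<in>{k. f k \<noteq> 0}. \<bar>f k\<bar>)" .
qed

lemma dual_ge:
  assumes "finite {k. f k \<noteq> 0}" "b \<in> c00" "ti_norm p g b \<le> 1"
  shows "\<bar>\<Sum>k\<in>{k. f k \<noteq> 0}. f k * b k\<bar> \<le> ti_dual_norm p g f"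
  unfolding dual_eq using assms by (intro cSUP_upper dual_bdd) (auto simp: DS_def)

lemma restr_norm: "y \<in> c00 \<Longrightarrow> ti_norm p g (restr E y) \<le> ti_norm p g y"
proof (rule norm_le)
  fix m assume y: "y \<in> c00"
  have "ti_iter p g m (restr E y) \<le> 1 * ti_iter p g m y"
    using y by (intro ti_dom1) (auto simp: restr_def)
  also have "\<dots> \<le> ti_norm p g y" using ti_le_norm[OF y] by simp
  finally show "ti_iter p g m (restr E y) \<le> ti_norm p g y" .
qed

end

lemma c00_sum:
  assumes "finite T" "\<forall>t\<in>T. u t \<in> c00"
  shows "(\<lambda>k. \<Sum>t\<in>T. \<alpha> t * u t k) \<in> c00"
proof -
  have "{k. (\<Sum>t\<in>T. \<alpha> t * u t k) \<noteq> 0} \<subseteq> (\<Union>t\<in>T. {k. u t k \<noteq> 0})"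
  proof
    fix k assume "k \<in> {k. (\<Sum>t\<in>T. \<alpha> t * u t k) \<noteq> 0}"
    then have "(\<Sum>t\<in>T. \<alpha> t * u t k) \<noteq> 0" by simp
    have "\<exists>t\<in>T. \<alpha> t * u t k \<noteq> 0"
    proof (rule ccontr)
      assume "\<not> (\<exists>t\<in>T. \<alpha> t * u t k \<noteq> 0)"
      then have "(\<Sum>t\<in>T. \<alpha> t * u t k) = 0" by (intro sum.neutral) auto
      then show False using \<open>(\<Sum>t\<in>T. \<alpha> t * u t k) \<noteq> 0\<close> by simp
    qed
    then obtain t where "t \<in> T" "\<alpha> t * u t k \<noteq> 0" by blast
    then show "k \<in> (\<Union>t\<in>T. {k. u t k \<noteq> 0})" by auto
  qed
  moreover have "finite (\<Union>t\<in>T. {k. u t k \<noteq> 0})" using assms unfolding c00_def by auto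
  ultimately show ?thesis unfolding c00_def mem_Collect_eq by (rule finite_subset)
qed

lemma sum_single:
  assumes "finite T" "j \<in> T" "\<forall>i\<in>T. i \<noteq> j \<longrightarrow> h i = 0"
  shows "(\<Sum>i\<in>T. h i) = (h j :: real)"
proof -
  have "(\<Sum>i\<in>T. h i) = h j + (\<Sum>i\<in>T - {j}. h i)" using assms by (simp add: sum.remove)
  also have "(\<Sum>i\<in>T - {j}. h i) = 0" using assms by (intro sum.neutral) auto
  finally show ?thesis by simp
qed

lemma eps_arg:
  fixes R D :: real
  assumes "\<And>\<epsilon>. 0 < \<epsilon> \<Longrightarrow> \<epsilon> < 1 \<Longrightarrow> (1 - \<epsilon>) * R \<le> D"
  shows "R \<le> D"
proof (rule ccontr)
  assume "\<not> R \<le> D"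
  then have DR: "D < R" by simp
  show False
  proof (cases "R \<le> 0")
    case True
    have "(1 - 1/2) * R \<le> D" using assms[of "1/2"] by simp
    then have "R / 2 \<le> D" by simp
    then show False using DR True by linarith
  next
    case False
    define \<epsilon> where "\<epsilon> = min (1/2) ((R - D) / (2 * R))"
    have e0: "0 < \<epsilon>" unfolding \<epsilon>_def using DR False by simp
    have e1: "\<epsilon> < 1" unfolding \<epsilon>_def by simp
    have "\<epsilon> * R \<le> (R - D) / (2 * R) * R" unfolding \<epsilon>_def using False by (intro mult_right_mono) auto
    also have "\<dots> = (R - D) / 2" using False by simp
    finally have "\<epsilon> * R \<le> (R - D) / 2" .
    moreover have "(1 - \<epsilon>) * R \<le> D" using assms e0 e1 by simp
    moreover have "(1 - \<epsilon>) * R = R - \<epsilon> * R" by (simp add: left_diff_distrib)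
    ultimately show False using DR by argo
  qed
qed


lemma re1: "(x::real) * (s * t / K) * y = (x * s * y) * t / K" by simp
lemma re2: "(u::real) * v * t / K = (u * t) * v / K" by simp

context tis
begin

lemma main:
  assumes g3: "g * 3 powr ee \<le> 1"
    and bb: "is_block_basis x"
    and nx: "\<forall>j. ti_dual_norm p g (x j) = 1"
  shows "ti_dual_norm p g (\<lambda>k. \<Sum>j<n. a j * x j k)
     \<ge> (1 / 3 powr ee) * (\<Sum>j<n. \<bar>a j\<bar> powr conj_exp p) powr ee"
proof -
  define q where "q = conj_exp p"
  have q1: "1 < q" unfolding q_def conj_exp_def using p1 by (simp add: field_simps)
  have qp: "(q - 1) * p = q" unfolding q_def conj_exp_def using p1 by (simp add: field_simps)
  have eeq: "ee = 1 - 1/p" using ee by simp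
  obtain pp where spp: "strict_mono pp" and xs: "\<forall>j k. x j k \<noteq> 0 \<longrightarrow> pp j < k \<and> k \<le> pp (Suc j)"
    using bb unfolding is_block_basis_def by blast
  define bl where "bl j = Suc (pp j)" for j
  define br where "br j = pp (Suc j)" for j
  have blk1: "\<forall>j. bl j \<le> br j" unfolding bl_def br_def using spp by (simp add: Suc_leI strict_monoD)
  have blk2: "\<forall>j j'. j < j' \<longrightarrow> br j < bl j'"
  proof (intro allI impI)
    fix j j' :: nat assume "j < j'"
    then have "Suc j \<le> j'" by simp
    then have "pp (Suc j) \<le> pp j'" using spp by (simp add: strict_mono_less_eq)
    then show "br j < bl j'" unfolding bl_def br_def by simp
  qed
  have xB: "x j k \<noteq> 0 \<Longrightarrow> k \<in> {bl j..br j}" for j k using xs[rule_format, of j k] unfolding bl_def br_def by (simp add: Suc_le_eq)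
  have Bdisj: "i \<noteq> j \<Longrightarrow> k \<in> {bl i..br i} \<Longrightarrow> k \<notin> {bl j..br j}" for i j k
  proof
    assume ij: "i \<noteq> j" and ki: "k \<in> {bl i..br i}" and kj: "k \<in> {bl j..br j}"
    show False
    proof (cases "i < j")
      case True then show False using blk2 ki kj by (meson atLeastAtMost_iff leD order.strict_trans2)
    next
      case False then have "j < i" using ij by simp
      then show False using blk2 ki kj by (meson atLeastAtMost_iff leD order.strict_trans2)
    qed
  qed
  have xfin: "finite {k. x j k \<noteq> 0}" for j
    by (rule finite_subset[of _ "{bl j..br j}"]) (auto intro: xB)
  define F where "F k = (\<Sum>j<n. a j * x j k)" for k
  define UB where "UB = (\<Union>j<n. {bl j..br j})"
  have finUB: "finite UB" unfolding UB_def by simp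
  have FUB: "{k. F k \<noteq> 0} \<subseteq> UB"
  proof
    fix k assume "k \<in> {k. F k \<noteq> 0}"
    then have "(\<Sum>j<n. a j * x j k) \<noteq> 0" unfolding F_def by simp
    then have "\<exists>j<n. a j * x j k \<noteq> 0"
      by (metis (mono_tags, lifting) lessThan_iff sum.neutral)
    then show "k \<in> UB" unfolding UB_def using xB by fastforce
  qed
  have Ffin: "finite {k. F k \<noteq> 0}" using finite_subset[OF FUB finUB] .
  define A where "A = (\<Sum>j<n. \<bar>a j\<bar> powr q)"
  have A0: "0 \<le> A" unfolding A_def by (intro sum_nonneg) auto
  have goal_eq: "(\<lambda>k. \<Sum>j<n. a j * x j k) = F" unfolding F_def ..
  show ?thesis
  proof (cases "A = 0")
    case True
    have "\<bar>\<Sum>k\<in>{k. F k \<noteq> 0}. F k * 0\<bar> \<le> ti_dual_norm p g F"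
      using dual_ge[OF Ffin zero_c00 zero_norm] by simp
    then show ?thesis using True unfolding goal_eq A_def q_def by simp
  next
    case False
    then have Apos: "0 < A" using A0 by simp
    show ?thesis unfolding goal_eq q_def[symmetric] A_def[symmetric]
    proof (rule eps_arg)
      fix \<epsilon> :: real assume e0: "0 < \<epsilon>" and e1: "\<epsilon> < 1"
      have ex: "\<exists>b. b \<in> c00 \<and> ti_norm p g b \<le> 1 \<and> 1 - \<epsilon> < \<bar>\<Sum>k\<in>{k. x j k \<noteq> 0}. x j k * b k\<bar>" for j
      proof -
        have "1 - \<epsilon> < ti_dual_norm p g (x j)" using nx e0 by simp
        then have "1 - \<epsilon> < (SUP b\<in>DS. \<bar>\<Sum>k\<in>{k. x j k \<noteq> 0}. x j k * b k\<bar>)" unfolding dual_eq .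
        then obtain b where "b \<in> DS" "1 - \<epsilon> < \<bar>\<Sum>k\<in>{k. x j k \<noteq> 0}. x j k * b k\<bar>"
          using less_cSUP_iff[OF _ dual_bdd[OF xfin]] DS_ne by blast
        then show ?thesis unfolding DS_def by blast
      qed
      then obtain Y where Y: "\<And>j. Y j \<in> c00" "\<And>j. ti_norm p g (Y j) \<le> 1"
          "\<And>j. 1 - \<epsilon> < \<bar>\<Sum>k\<in>{k. x j k \<noteq> 0}. x j k * Y j k\<bar>"
        by metis
      define y where "y j = restr {bl j..br j} (Y j)" for j
      define \<pi> where "\<pi> j = (\<Sum>k\<in>{k. x j k \<noteq> 0}. x j k * y j k)" for j
      have yc00: "y j \<in> c00" for j unfolding y_def using Y(1) by (rule restr_c00)
      have ynorm: "ti_norm p g (y j) \<le> 1" for j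
        unfolding y_def using restr_norm[OF Y(1)] Y(2) order_trans by blast
      have yB: "y j k \<noteq> 0 \<Longrightarrow> k \<in> {bl j..br j}" for j k unfolding y_def restr_def by (auto split: if_splits)
      have pieq: "\<pi> j = (\<Sum>k\<in>{k. x j k \<noteq> 0}. x j k * Y j k)" for j
        unfolding \<pi>_def y_def restr_def by (rule sum.cong) (auto dest: xB)
      have pibig: "1 - \<epsilon> < \<bar>\<pi> j\<bar>" for j using Y(3) pieq by simp
      have pinz: "\<pi> j \<noteq> 0" for j using pibig[of j] e1 by auto
      define K where "K = 3 powr ee * A powr (1/p)"
      have Kpos: "0 < K" unfolding K_def using Apos by simp
      define c where "c j = sgn (a j * \<pi> j) * \<bar>a j\<bar> powr (q - 1) / K" for j
      define w where "w k = (\<Sum>j<n. c j * y j k)" for k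
      have wc00: "w \<in> c00" unfolding w_def using yc00 by (intro c00_sum) auto
      have wB: "w k = c j * y j k" if "j < n" "k \<in> {bl j..br j}" for j k
        unfolding w_def using that
        by (intro sum_single) (auto dest: yB Bdisj)
      have FB: "F k = a j * x j k" if "j < n" "k \<in> {bl j..br j}" for j k
        unfolding F_def using that
        by (intro sum_single) (auto dest: xB Bdisj)
      have absc: "\<bar>c j\<bar> = \<bar>a j\<bar> powr (q - 1) / K" for j
      proof (cases "a j = 0")
        case True then show ?thesis unfolding c_def by simp
      next
        case False
        then have "\<bar>sgn (a j * \<pi> j)\<bar> = 1" using pinz[of j] by (simp add: abs_sgn_eq)
        then show ?thesis unfolding c_def using Kpos by (simp add: abs_mult)
      qed
      have wnorm: "ti_norm p g w \<le> 1"
      proof (rule norm_le)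
        fix m
        have "ti_iter p g m w \<le> 3 powr ee * (\<Sum>j\<in>{..<n}. \<bar>c j\<bar> powr p) powr (1/p)"
        proof (rule UE[OF g3 blk1 blk2])
          show "\<forall>j. 0 \<le> \<bar>c j\<bar>" by simp
          show "w \<in> c00" by (rule wc00)
          show "finite {..<n}" by simp
          show "\<forall>k. w k \<noteq> 0 \<longrightarrow> (\<exists>j\<in>{..<n}. k \<in> {bl j..br j})"
          proof (intro allI impI)
            fix k assume "w k \<noteq> 0"
            then have "\<exists>j<n. c j * y j k \<noteq> 0" unfolding w_def
              by (metis (mono_tags, lifting) lessThan_iff sum.neutral)
            then show "\<exists>j\<in>{..<n}. k \<in> {bl j..br j}" using yB by fastforce
          qed
          show "\<forall>j\<in>{..<n}. \<forall>k'. ti_iter p g k' (restr {bl j..br j} w) \<le> \<bar>c j\<bar>"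
          proof (intro ballI allI)
            fix j k' assume j: "j \<in> {..<n}"
            have "ti_iter p g k' (restr {bl j..br j} w) \<le> \<bar>c j\<bar> * ti_iter p g k' (y j)"
            proof (rule ti_dom1[OF yc00])
              show "0 \<le> \<bar>c j\<bar>" by simp
              show "\<forall>k. \<bar>restr {bl j..br j} w k\<bar> \<le> \<bar>c j\<bar> * \<bar>y j k\<bar>"
                using wB j unfolding restr_def by (auto simp: abs_mult)
            qed
            also have "\<dots> \<le> \<bar>c j\<bar> * 1"
              using ti_le_norm[OF yc00, of k' j] ynorm[of j] by (intro mult_left_mono) auto
            finally show "ti_iter p g k' (restr {bl j..br j} w) \<le> \<bar>c j\<bar>" by simp
          qed
        qed
        also have "(\<Sum>j\<in>{..<n}. \<bar>c j\<bar> powr p) = A / K powr p"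
        proof -
          have "\<bar>c j\<bar> powr p = \<bar>a j\<bar> powr q / K powr p" for j
            unfolding absc using Kpos p1 q1 qp by (simp add: powr_divide powr_powr)
          then show ?thesis unfolding A_def by (simp add: sum_divide_distrib)
        qed
        also have "3 powr ee * (A / K powr p) powr (1/p) = 1"
          using Kpos Apos p1 unfolding K_def
          by (simp add: powr_divide powr_powr powr_mult)
        finally show "ti_iter p g m w \<le> 1" .
      qed
      have "(\<Sum>k\<in>{k. F k \<noteq> 0}. F k * w k) = (\<Sum>k\<in>UB. F k * w k)"
        by (rule sum.mono_neutral_left[OF finUB FUB]) auto
      also have "\<dots> = (\<Sum>j<n. \<Sum>k\<in>{bl j..br j}. F k * w k)"
        unfolding UB_def
      proof (rule sum.UNION_disjoint)
        show "\<forall>i\<in>{..<n}. \<forall>j\<in>{..<n}. i \<noteq> j \<longrightarrow> {bl i..br i} \<inter> {bl j..br j} = {}"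
          using Bdisj by (metis disjoint_iff)
      qed auto
      also have "\<dots> = (\<Sum>j<n. a j * c j * \<pi> j)"
      proof (rule sum.cong[OF refl])
        fix j assume j: "j \<in> {..<n}"
        have "(\<Sum>k\<in>{bl j..br j}. F k * w k) = (\<Sum>k\<in>{bl j..br j}. a j * c j * (x j k * y j k))"
          using FB wB j by (intro sum.cong) (auto simp: algebra_simps)
        also have "\<dots> = a j * c j * (\<Sum>k\<in>{bl j..br j}. x j k * y j k)"
          by (simp add: sum_distrib_left)
        also have "(\<Sum>k\<in>{bl j..br j}. x j k * y j k) = \<pi> j"
          unfolding \<pi>_def by (rule sum.mono_neutral_right) (auto dest: xB)
        finally show "(\<Sum>k\<in>{bl j..br j}. F k * w k) = a j * c j * \<pi> j" .
      qed
      also have "\<dots> = (\<Sum>j<n. \<bar>a j\<bar> powr q * \<bar>\<pi> j\<bar> / K)"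
      proof (rule sum.cong[OF refl])
        fix j
        have s1: "a j * sgn (a j * \<pi> j) * \<pi> j = \<bar>a j\<bar> * \<bar>\<pi> j\<bar>"
        proof -
          have "a j * sgn (a j * \<pi> j) * \<pi> j = (a j * \<pi> j) * sgn (a j * \<pi> j)"
            by (simp only: ac_simps)
          also have "\<dots> = \<bar>a j * \<pi> j\<bar>" by (rule abs_sgn[symmetric])
          finally show ?thesis by (simp add: abs_mult)
        qed
        have s2: "\<bar>a j\<bar> * \<bar>a j\<bar> powr (q - 1) = \<bar>a j\<bar> powr q"
        proof (cases "a j = 0")
          case True then show ?thesis using q1 by simp
        next
          case False
          have "\<bar>a j\<bar> powr (1 + (q - 1)) = \<bar>a j\<bar> powr 1 * \<bar>a j\<bar> powr (q - 1)" by (rule powr_add)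
          then show ?thesis using False by simp
        qed
        have "a j * c j * \<pi> j = (a j * sgn (a j * \<pi> j) * \<pi> j) * \<bar>a j\<bar> powr (q - 1) / K"
          unfolding c_def by (rule re1)
        also have "\<dots> = (\<bar>a j\<bar> * \<bar>a j\<bar> powr (q - 1)) * \<bar>\<pi> j\<bar> / K" unfolding s1 by (rule re2)
        also have "\<dots> = \<bar>a j\<bar> powr q * \<bar>\<pi> j\<bar> / K" unfolding s2 ..
        finally show "a j * c j * \<pi> j = \<bar>a j\<bar> powr q * \<bar>\<pi> j\<bar> / K" .
      qed
      finally have pair: "(\<Sum>k\<in>{k. F k \<noteq> 0}. F k * w k) = (\<Sum>j<n. \<bar>a j\<bar> powr q * \<bar>\<pi> j\<bar> / K)" .
      have "(1 - \<epsilon>) * A / K = (A * (1 - \<epsilon>)) / K" by (simp only: mult.commute)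
      also have "A * (1 - \<epsilon>) = (\<Sum>j<n. \<bar>a j\<bar> powr q * (1 - \<epsilon>))" unfolding A_def by (rule sum_distrib_right)
      also have "(\<Sum>j<n. \<bar>a j\<bar> powr q * (1 - \<epsilon>)) / K = (\<Sum>j<n. \<bar>a j\<bar> powr q * (1 - \<epsilon>) / K)"
        by (rule sum_divide_distrib)
      also have "\<dots> \<le> (\<Sum>j<n. \<bar>a j\<bar> powr q * \<bar>\<pi> j\<bar> / K)"
      proof (rule sum_mono)
        fix j
        have "1 - \<epsilon> \<le> \<bar>\<pi> j\<bar>" using pibig[of j] by (rule less_imp_le)
        then have "\<bar>a j\<bar> powr q * (1 - \<epsilon>) \<le> \<bar>a j\<bar> powr q * \<bar>\<pi> j\<bar>" by (rule mult_left_mono) simp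
        then show "\<bar>a j\<bar> powr q * (1 - \<epsilon>) / K \<le> \<bar>a j\<bar> powr q * \<bar>\<pi> j\<bar> / K"
          using Kpos by (rule divide_right_mono[OF _ less_imp_le])
      qed
      also have "\<dots> \<le> \<bar>\<Sum>k\<in>{k. F k \<noteq> 0}. F k * w k\<bar>" unfolding pair by simp
      also have "\<dots> \<le> ti_dual_norm p g F" by (rule dual_ge[OF Ffin wc00 wnorm])
      finally have fin: "(1 - \<epsilon>) * A / K \<le> ti_dual_norm p g F" .
      have "A / K = 1 / 3 powr ee * A powr ee"
      proof -
        have "A = A powr 1" using Apos by simp
        also have "A powr 1 = A powr ee * A powr (1/p)" using eeq by (simp add: powr_add[symmetric])
        finally have "A / K = A powr ee * A powr (1/p) / (3 powr ee * A powr (1/p))" unfolding K_def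
          by simp
        also have "A powr ee * A powr (1/p) / (3 powr ee * A powr (1/p)) = A powr ee / 3 powr ee"
          using Apos by simp
        finally show ?thesis by simp
      qed
      then show "(1 - \<epsilon>) * (1 / 3 powr ee * A powr ee) \<le> ti_dual_norm p g F"
      proof -
        have "(1 - \<epsilon>) * (A / K) \<le> ti_dual_norm p g F" using fin by (simp only: times_divide_eq_right)
        then show ?thesis using \<open>A / K = 1 / 3 powr ee * A powr ee\<close> by simp
      qed
    qed
  qed
qed

end


theorem lemma4:
  fixes p \<gamma> :: real and x :: "nat \<Rightarrow> nat \<Rightarrow> real"
  assumes "1 < p"
    and "0 < \<gamma>" and "\<gamma> < 3 powr (- 1 / conj_exp p)"
    and "is_block_basis x"
    and "\<forall>j. ti_dual_norm p \<gamma> (x j) = 1"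
  shows "\<forall>(n::nat) (a::nat \<Rightarrow> real).
    ti_dual_norm p \<gamma> (\<lambda>k. \<Sum>j<n. a j * x j k)
      \<ge> (1 / 3 powr (1 / conj_exp p)) * (\<Sum>j<n. \<bar>a j\<bar> powr conj_exp p) powr (1 / conj_exp p)"
proof -
  have q0: "0 < conj_exp p" unfolding conj_exp_def using assms(1) by simp
  have m: "3 powr (- 1 / conj_exp p) = 1 / 3 powr (1 / conj_exp p)"
    by (simp add: powr_minus_divide)
  have t1: "1 \<le> 3 powr (1 / conj_exp p)" using q0 by (intro ge_one_powr_ge_zero) auto
  have g1: "\<gamma> \<le> 1" using assms(3) t1 unfolding m
    by (smt (verit, best) divide_le_eq_1_pos)
  interpret tis p \<gamma> using assms(1,2) g1 by unfold_locales auto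
  have g3: "\<gamma> * 3 powr ee \<le> 1"
    using assms(3) t1 unfolding m ee_def by (simp add: less_divide_eq less_imp_le)
  show ?thesis
    using main[OF g3 assms(4,5)] unfolding ee_def by blast
qed

end
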